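(* For each integer $k\ge1$, the function $F_k:(\tfrac12,\tfrac34)\to\mathbb{R}_+$, $F_k(h)=\rho_h(k)$, is increasing. Consequently $\lim_{h\to\frac12+}\sum_{k=1}^\infty\rho_h^2(k)=0$.
   Context: $\rho_h(k)=\frac12\big((k+1)^{2h}+(k-1)^{2h}-2k^{2h}\big)$. *)

theory Defs
  imports "HOL-Analysis.Analysis"
begin

definition rho :: "real \<Rightarrow> nat \<Rightarrow> real" where
  "rho h k = ((real k + 1) powr (2*h) + (real k - 1) powr (2*h) - 2 * (real k) powr (2*h)) / 2"

end

theory Submission
  imports Defs
begin

lemma phi_pos:
  fixes t :: real assumes "0 < t" "t < 1"
  shows "(1+t) * ln (1+t) + (1-t) * ln (1-t) > 0"
proof -
  have "ln (1/(1+t)) \<le> 1/(1+t) - 1" using assms by (intro ln_le_minus_one) auto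
  moreover have "ln (1/(1+t)) \<noteq> 1/(1+t) - 1" using assms ln_eq_minus_one[of "1/(1+t)"] by auto
  ultimately have "ln (1/(1+t)) < 1/(1+t) - 1" by linarith
  hence a: "ln (1+t) > t/(1+t)" using assms by (simp add: ln_div field_simps)
  hence a': "(1+t) * ln (1+t) > t" using assms by (simp add: field_simps)
  have "ln (1/(1-t)) \<le> 1/(1-t) - 1" using assms by (intro ln_le_minus_one) auto
  hence "- ln (1-t) \<le> t/(1-t)" using assms by (simp add: ln_div field_simps)
  hence "(1-t) * ln (1-t) \<ge> -t" using assms by (simp add: field_simps)
  with a' show ?thesis by linarith
qed

lemma u_deriv:
  fixes t :: real assumes "0 < t" "t < 1"
  shows "((\<lambda>a. (1+t) powr a + (1-t) powr a) has_real_derivative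
          (1+t) powr a * ln (1+t) + (1-t) powr a * ln (1-t)) (at a)"
  using assms by (auto intro!: derivative_eq_intros simp: powr_def)

lemma u_deriv_pos:
  fixes t a :: real assumes "0 < t" "t < 1" "1 \<le> a"
  shows "(1+t) powr a * ln (1+t) + (1-t) powr a * ln (1-t) > 0"
proof -
  have "(1+t) powr a \<ge> (1+t) powr 1" using assms by (intro powr_mono) auto
  hence 1: "(1+t) powr a * ln (1+t) \<ge> (1+t) * ln (1+t)" using assms
    by (intro mult_right_mono) auto
  have "(1-t) powr a \<le> (1-t) powr 1" using assms by (intro powr_mono') auto
  moreover have "ln (1-t) < 0" using assms by (intro ln_less_zero) auto
  ultimately have 2: "(1-t) powr a * ln (1-t) \<ge> (1-t) * ln (1-t)" using assms
    by (simp add: mult_right_mono_neg)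
  show ?thesis using 1 2 phi_pos[OF assms(1,2)] by linarith
qed

lemma u_mono:
  fixes t a b :: real assumes "0 < t" "t < 1" "1 \<le> b" "b < a"
  shows "(1+t) powr b + (1-t) powr b < (1+t) powr a + (1-t) powr a"
proof (rule DERIV_pos_imp_increasing[OF assms(4)])
  fix x assume "b \<le> x" "x \<le> a"
  thus "\<exists>y. ((\<lambda>a. (1+t) powr a + (1-t) powr a) has_real_derivative y) (at x) \<and> y > 0"
  proof (intro exI conjI)
    show "((\<lambda>a. (1+t) powr a + (1-t) powr a) has_real_derivative
          (1+t) powr x * ln (1+t) + (1-t) powr x * ln (1-t)) (at x)" by (rule u_deriv[OF assms(1,2)])
    show "(1+t) powr x * ln (1+t) + (1-t) powr x * ln (1-t) > 0"
      using u_deriv_pos[OF assms(1,2), of x] assms(3) \<open>b \<le> x\<close> by linarith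
  qed
qed

lemma u_gt2:
  fixes t a :: real assumes "0 < t" "t < 1" "1 < a"
  shows "(1+t) powr a + (1-t) powr a > 2"
  using u_mono[OF assms(1,2) order_refl assms(3)] assms by simp

lemma rho_eq:
  assumes "real k > 1"
  shows "rho h k = (real k) powr (2*h) * ((1 + 1/real k) powr (2*h) + (1 - 1/real k) powr (2*h) - 2) / 2"
proof -
  have "real k + 1 = real k * (1 + 1/real k)" "real k - 1 = real k * (1 - 1/real k)"
    using assms by (auto simp: field_simps)
  hence "(real k + 1) powr (2*h) = real k powr (2*h) * (1 + 1/real k) powr (2*h)"
        "(real k - 1) powr (2*h) = real k powr (2*h) * (1 - 1/real k) powr (2*h)"
    using assms by (simp_all add: powr_mult del: of_nat_add)
  thus ?thesis unfolding rho_def by (simp add: algebra_simps)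
qed

lemma rho_pos_mono:
  assumes "k \<ge> 1" "1/2 < h1" "h1 < h2"
  shows "0 < rho h1 k \<and> rho h1 k < rho h2 k"
proof (cases "k = 1")
  case True
  have "2 powr 1 < (2::real) powr (2*h1)" "(2::real) powr (2*h1) < 2 powr (2*h2)"
    using assms by (intro powr_less_mono; simp)+
  thus ?thesis using True by (simp add: rho_def)
next
  case False
  hence k: "real k > 1" using assms by simp
  define t where "t = 1 / real k"
  have t: "0 < t" "t < 1" using k by (auto simp: t_def)
  have e: "rho h k = real k powr (2*h) * ((1+t) powr (2*h) + (1-t) powr (2*h) - 2) / 2" for h
    using rho_eq[OF k] by (simp add: t_def)
  have p1: "(1+t) powr (2*h1) + (1-t) powr (2*h1) - 2 > 0"
    using u_gt2[OF t, of "2*h1"] assms by simp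
  have p2: "(1+t) powr (2*h1) + (1-t) powr (2*h1) - 2 < (1+t) powr (2*h2) + (1-t) powr (2*h2) - 2"
    using u_mono[OF t, of "2*h1" "2*h2"] assms by simp
  have q: "real k powr (2*h1) < real k powr (2*h2)" using k assms by (intro powr_less_mono) auto
  have "real k powr (2*h1) * ((1+t) powr (2*h1) + (1-t) powr (2*h1) - 2)
      < real k powr (2*h2) * ((1+t) powr (2*h2) + (1-t) powr (2*h2) - 2)"
    using p1 p2 q k by (intro mult_strict_mono) auto
  moreover have "real k powr (2*h1) * ((1+t) powr (2*h1) + (1-t) powr (2*h1) - 2) > 0"
    using p1 k by simp
  ultimately show ?thesis unfolding e by (simp add: divide_strict_right_mono)
qed

lemma rho_half: "k \<ge> 1 \<Longrightarrow> rho (1/2) k = 0"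
  by (simp add: rho_def powr_one)

lemma mvt_powr:
  fixes x y p :: real assumes "0 < y" "y < x"
  shows "\<exists>z. y < z \<and> z < x \<and> x powr p - y powr p = (x - y) * (p * z powr (p - 1))"
proof -
  have "\<exists>z. y < z \<and> z < x \<and> (\<lambda>x. x powr p) x - (\<lambda>x. x powr p) y = (x - y) * (p * z powr (p - 1))"
    using assms by (intro MVT2) (auto intro!: has_real_derivative_powr)
  thus ?thesis by simp
qed

lemma rho_bound:
  assumes "m \<ge> 1" "1/2 < h" "h < 1"
  shows "rho h (Suc m) \<le> 2 * real m powr (2*h - 2)"
proof -
  define a where "a = 2*h"
  define k where "k = real m + 1"
  have a: "1 < a" "a < 2" using assms by (auto simp: a_def)
  have k: "k - 1 = real m" "real m \<ge> 1" using assms by (auto simp: k_def)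
  obtain z1 where z1: "k < z1" "z1 < k+1" "(k+1) powr a - k powr a = (k+1-k) * (a * z1 powr (a-1))"
    using mvt_powr[of k "k+1" a] k by auto
  obtain z2 where z2: "k-1 < z2" "z2 < k" "k powr a - (k-1) powr a = (k-(k-1)) * (a * z2 powr (a-1))"
    using mvt_powr[of "k-1" k a] k by auto
  obtain z3 where z3: "k-1 < z3" "z3 < k+1" "(k+1) powr (a-1) - (k-1) powr (a-1) = (k+1-(k-1)) * ((a-1) * z3 powr (a-1-1))"
    using mvt_powr[of "k-1" "k+1" "a-1"] k by auto
  have "z1 powr (a-1) \<le> (k+1) powr (a-1)" using z1 a k by (intro powr_mono2) auto
  hence d1: "(k+1) powr a - k powr a \<le> a * (k+1) powr (a-1)" using z1(3) a by simp
  have "(k-1) powr (a-1) \<le> z2 powr (a-1)" using z2 a k by (intro powr_mono2) auto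
  hence d2: "k powr a - (k-1) powr a \<ge> a * (k-1) powr (a-1)" using z2(3) a by simp
  have "z3 powr (a-2) \<le> (k-1) powr (a-2)" using z3 a k by (intro powr_mono2') auto
  hence "2*(a-1)*z3 powr (a-2) \<le> 2*(a-1)*(k-1) powr (a-2)" using a by (intro mult_left_mono) auto
  hence d3: "(k+1) powr (a-1) - (k-1) powr (a-1) \<le> 2 * (a-1) * (k-1) powr (a-2)"
    using z3(3) a by (simp add: algebra_simps)
  have "2 * rho h (Suc m) = ((k+1) powr a - k powr a) - (k powr a - (k-1) powr a)"
    unfolding rho_def a_def k_def by (simp add: add.commute)
  also have "\<dots> \<le> a * ((k+1) powr (a-1) - (k-1) powr (a-1))"
    using d1 d2 by (simp add: algebra_simps)
  also have "\<dots> \<le> a * (2 * (a-1) * (k-1) powr (a-2))"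
    using d3 a by (intro mult_left_mono) auto
  also have "\<dots> \<le> 2 * (2 * (k-1) powr (a-2))"
  proof -
    have "a * (a-1) \<le> 2 * 1" using a by (intro mult_mono) auto
    moreover have "(k-1) powr (a-2) \<ge> 0" by simp
    ultimately have "(a*(a-1)) * (2 * (k-1) powr (a-2)) \<le> 2 * (2 * (k-1) powr (a-2))"
      by (intro mult_right_mono) auto
    thus ?thesis by (simp add: algebra_simps)
  qed
  finally show ?thesis using k by (simp add: a_def)
qed

lemma rho_summable:
  assumes "1/2 < h" "h < 3/4"
  shows "summable (\<lambda>k. (rho h (Suc k))\<^sup>2)"
proof (rule summable_comparison_test_ev)
  show "summable (\<lambda>k. 4 * real k powr (4*h - 4))"
    using assms by (intro summable_mult) (simp add: summable_real_powr_iff)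
  show "\<forall>\<^sub>F k in sequentially. norm ((rho h (Suc k))\<^sup>2) \<le> 4 * real k powr (4*h - 4)"
    using eventually_ge_at_top[of "1::nat"]
  proof eventually_elim
    case (elim k)
    have r0: "0 \<le> rho h (Suc k)" using rho_pos_mono[of "Suc k" h "h+1"] assms by auto
    have rb: "rho h (Suc k) \<le> 2 * real k powr (2*h - 2)" using rho_bound[of k h] elim assms by auto
    have "(rho h (Suc k))\<^sup>2 \<le> (2 * real k powr (2*h - 2))\<^sup>2"
      using r0 rb by (intro power_mono) auto
    also have "\<dots> = 4 * (real k powr (2*h - 2) * real k powr (2*h - 2))"
      by (simp add: power2_eq_square)
    also have "\<dots> = 4 * real k powr (4*h - 4)"
      by (simp add: powr_add[symmetric])
    finally show ?case by simp
  qed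
qed

lemma rho_isCont:
  assumes "k \<ge> 1"
  shows "isCont (\<lambda>h. rho h k) x"
proof (cases "k = 1")
  case True
  then show ?thesis unfolding rho_def by (auto intro!: continuous_intros)
next
  case False
  hence "real k - 1 > 0" using assms by simp
  then show ?thesis unfolding rho_def by (auto intro!: continuous_intros)
qed

lemma rho_tendsto:
  assumes "k \<ge> 1"
  shows "((\<lambda>h. rho h k) \<longlongrightarrow> 0) (at_right (1/2))"
proof -
  have "((\<lambda>h. rho h k) \<longlongrightarrow> rho (1/2) k) (at (1/2))"
    using rho_isCont[OF assms] isCont_def by blast
  hence "((\<lambda>h. rho h k) \<longlongrightarrow> rho (1/2) k) (at_right (1/2))"
    by (rule tendsto_mono[rotated]) (simp add: at_le)
  thus ?thesis using rho_half[OF assms] by simp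
qed

theorem lemmaA3:
  shows "(\<forall>k::nat. k \<ge> 1 \<longrightarrow>
            (\<forall>h\<in>{1/2<..<3/4}. rho h k > 0) \<and>
            strict_mono_on {1/2<..<3/4::real} (\<lambda>h. rho h k))
         \<and> (\<forall>h\<in>{1/2<..<3/4::real}. summable (\<lambda>k. (rho h (Suc k))\<^sup>2))
         \<and> ((\<lambda>h. \<Sum>k. (rho h (Suc k))\<^sup>2) \<longlongrightarrow> 0) (at_right (1/2))"
proof (intro conjI allI impI ballI)
  fix k :: nat assume k: "k \<ge> 1"
  fix h :: real assume "h \<in> {1/2<..<3/4}"
  thus "rho h k > 0" using rho_pos_mono[OF k, of h "h+1"] by auto
next
  fix k :: nat assume k: "k \<ge> 1"
  show "strict_mono_on {1/2<..<3/4::real} (\<lambda>h. rho h k)"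
    by (rule strict_mono_onI) (use rho_pos_mono[OF k] in auto)
next
  fix h :: real assume "h \<in> {1/2<..<3/4}"
  thus "summable (\<lambda>k. (rho h (Suc k))\<^sup>2)" using rho_summable by auto
next
  define h0 :: real where "h0 = 5/8"
  have "((\<lambda>h. \<Sum>k. (rho h (Suc k))\<^sup>2) \<longlongrightarrow> (\<Sum>k. (0::real))) (at_right (1/2))"
  proof (rule tannerys_theorem[THEN conjunct2, THEN conjunct2])
    show "((\<lambda>h. (rho h (Suc k))\<^sup>2) \<longlongrightarrow> 0) (at_right (1/2))" for k
      using tendsto_power[OF rho_tendsto[of "Suc k"], of 2] by simp
    show "summable (\<lambda>k. (rho h0 (Suc k))\<^sup>2)" using rho_summable by (simp add: h0_def)
    show "at_right (1/2::real) \<noteq> bot" by simp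
    have ev: "eventually (\<lambda>h. 1/2 < h \<and> h \<le> h0) (at_right (1/2::real))"
      unfolding h0_def eventually_at_right_field by (intro exI[of _ "5/8"]) auto
    show "\<forall>\<^sub>F (k, h) in sequentially \<times>\<^sub>F at_right (1/2). norm ((rho h (Suc k))\<^sup>2) \<le> (rho h0 (Suc k))\<^sup>2"
      unfolding eventually_prod_filter
    proof (intro exI conjI allI impI)
      show "eventually (\<lambda>_. True) sequentially" by simp
      show "eventually (\<lambda>h. 1/2 < h \<and> h \<le> h0) (at_right (1/2::real))" by (rule ev)
      fix k :: nat and h :: real assume "1/2 < h \<and> h \<le> h0"
      hence h: "1/2 < h" "h \<le> h0" by auto
      have "0 < rho h (Suc k)" using rho_pos_mono[of "Suc k" h "h+1"] h by auto
      moreover have "rho h (Suc k) \<le> rho h0 (Suc k)"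
        using rho_pos_mono[of "Suc k" h h0] h by (cases "h = h0") auto
      ultimately show "(\<lambda>(k, h). norm ((rho h (Suc k))\<^sup>2) \<le> (rho h0 (Suc k))\<^sup>2) (k, h)"
        by (simp add: power_mono)
    qed
  qed
  thus "((\<lambda>h. \<Sum>k. (rho h (Suc k))\<^sup>2) \<longlongrightarrow> 0) (at_right (1/2))" by simp
qed

end
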